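(* Fix $\lambda>1$. There exists $\beta_0>0$ such that for every $\beta\in[0,\beta_0)$ there exists a value $\alpha_0=\alpha_0(\beta)>0$ such that the sequence $\{\alpha_j\}_{j\ge 0}$ generated from $\alpha_{-1}=0$ and this $\alpha_0$ by the recursion below, together with $a_j^*:=\lambda^{-j}\alpha_j$, satisfies $$a_j^*\approx \mathrm{const}(\beta)\cdot\lambda^{-j/3}\quad\text{as } j\to\infty,$$ i.e. there is a constant $C(\beta)>0$ with $a_j^*/(C(\beta)\lambda^{-j/3})\to 1$ as $j\to\infty$.
   Context: The recursion is as follows. For $\beta>0$ and $n\ge 0$: $$\alpha_{n+1}=-\frac{\lambda}{2\beta}\alpha_n+\sqrt{\Big(\frac{\lambda}{2\beta}\alpha_n\Big)^2+\frac{\lambda}{\beta}\big(\lambda^2\alpha_{n-1}^2+\beta\lambda\alpha_{n-1}\alpha_n+\alpha_n\big)}.$$ For $\beta=0$ and $n\ge0$: $\alpha_{n+1}=1+\lambda^2\frac{\alpha_{n-1}^2}{\alpha_n}$. (These recursions arise from seeking self-similar solutions $a_j(t)=a_j^*/(t-t_0)$ of the dyadic system $\frac{da_j}{dt}=\lambda^j a_{j-1}^2-\lambda^{j+1}a_ja_{j+1}+\beta(\lambda^j a_{j-1}a_j-\lambda^{j+1}a_{j+1}^2)$, $j\ge0$, with boundary condition $a_{-1}\equiv 0$; the relation $a_j^*\approx \mathrm{const}\cdot\lambda^{-j/3}$ means the ratio tends to $1$.) *)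

theory Defs
  imports Complex_Main
begin

definition alpha_step :: "real \<Rightarrow> real \<Rightarrow> real \<Rightarrow> real \<Rightarrow> real" where
  "alpha_step lam beta a b =
     (if beta = 0 then 1 + lam^2 * a^2 / b
      else - (lam / (2*beta)) * b
           + sqrt ((lam / (2*beta) * b)^2 + (lam / beta) * (lam^2 * a^2 + beta * lam * a * b + b)))"

text \<open>Shifted sequence: alpha_seq lam beta a0 k = alpha_{k-1}; i.e. alpha_{-1} = 0, alpha_0 = a0.\<close>
fun alpha_seq_shift :: "real \<Rightarrow> real \<Rightarrow> real \<Rightarrow> nat \<Rightarrow> real" where
  "alpha_seq_shift lam beta a0 0 = 0"
| "alpha_seq_shift lam beta a0 (Suc 0) = a0"
| "alpha_seq_shift lam beta a0 (Suc (Suc n)) =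
     alpha_step lam beta (alpha_seq_shift lam beta a0 n) (alpha_seq_shift lam beta a0 (Suc n))"

definition alpha :: "real \<Rightarrow> real \<Rightarrow> real \<Rightarrow> nat \<Rightarrow> real" where
  "alpha lam beta a0 j = alpha_seq_shift lam beta a0 (Suc j)"

end

theory Submission imports Defs "HOL-Analysis.Analysis" begin


lemma step_eq:
  assumes lam: "lam > 0" and be: "beta \<ge> 0" and a: "a \<ge> 0" and b: "b > 0"
  shows "alpha_step lam beta a b > 0 \<and>
    b * alpha_step lam beta a b + beta / lam * (alpha_step lam beta a b)^2 = lam^2*a^2 + beta*lam*a*b + b"
proof (cases "beta = 0")
  case True
  then show ?thesis using b lam a by (simp add: alpha_step_def field_simps add_pos_nonneg)
next
  case False
  hence bp: "beta > 0" using be by simp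
  define k where "k = lam / (2*beta)"
  define R where "R = lam^2*a^2 + beta*lam*a*b + b"
  have R: "R > 0" unfolding R_def using a b bp lam by (intro add_nonneg_pos) auto
  have kp: "k > 0" unfolding k_def using lam bp by simp
  define D where "D = (k*b)^2 + (lam/beta) * R"
  have D: "D > (k*b)^2" unfolding D_def using R lam bp by simp
  have sD: "sqrt D > k*b"
    using D kp b by (metis abs_of_pos mult_pos_pos real_less_rsqrt real_sqrt_abs)
  have f: "alpha_step lam beta a b = sqrt D - k*b"
    using False unfolding alpha_step_def D_def R_def k_def by (simp add: algebra_simps)
  have sq: "(sqrt D)^2 = D" using D by (simp add: order_trans[OF zero_le_power2 less_imp_le])
  have e1: "beta/lam*(2*k) = 1" unfolding k_def using lam bp by simp
  have "b * (sqrt D - k*b) + beta / lam * (sqrt D - k*b)^2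
      = beta/lam * ((sqrt D)^2 - (k*b)^2) + (1 - beta/lam*(2*k)) * (b*(sqrt D - k*b))"
    by (simp add: power2_eq_square algebra_simps)
  also have "\<dots> = beta/lam * ((sqrt D)^2 - (k*b)^2)" by (subst e1) simp
  also have "\<dots> = R" using sq lam bp unfolding D_def by simp
  finally show ?thesis using f sD R_def by simp
qed

lemma phi_mono:
  fixes b t f beta lam :: real
  assumes "beta \<ge> 0" "lam > 0" "b > 0" "t \<ge> 0" "f \<ge> 0"
    and "b*t + beta/lam*t^2 < b*f + beta/lam*f^2"
  shows "t < f"
proof (rule ccontr)
  assume "\<not> t < f" hence ft: "f \<le> t" by simp
  have "b*f \<le> b*t" using ft assms by simp
  moreover have "f^2 \<le> t^2" using ft assms by (simp add: power_mono)
  hence "beta/lam*f^2 \<le> beta/lam*t^2" using assms by (intro mult_left_mono) auto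
  ultimately show False using assms(6) by linarith
qed

lemma escape_minus:
  assumes lam: "lam > 0" and be: "beta \<ge> 0" and mu: "mu > 1" and lm: "lam^2 = mu^3"
    and a: "a > 0" and b: "b = mu * a"
    and cond: "beta*(2*b + 1/mu^2) < lam*b*(1-1/mu)"
  shows "mu*b + 1/mu < alpha_step lam beta a b"
proof -
  have bp: "b > 0" using a mu b by simp
  note S = step_eq[OF lam be less_imp_le[OF a] bp]
  define f where "f = alpha_step lam beta a b"
  define t where "t = mu*b + 1/mu"
  have "lam^2*a^2 = mu * b^2" using b lm mu by (simp add: power2_eq_square power3_eq_cube field_simps)
  moreover have "beta*lam*a*b = beta/lam * mu^2 * b^2"
    using b lm mu lam by (simp add: power2_eq_square power3_eq_cube field_simps)
  ultimately have rhs: "b*f + beta/lam*f^2 = mu*b^2 + beta/lam*mu^2*b^2 + b" using S f_def by simp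
  have lt: "b*t + beta/lam*t^2 = mu*b^2 + b/mu + beta/lam*(mu^2*b^2 + 2*b + 1/mu^2)"
    unfolding t_def using mu by (simp add: power2_eq_square field_simps)
  have "beta/lam*(2*b + 1/mu^2) < b*(1-1/mu)"
    using cond lam by (simp add: field_simps)
  hence "b*t + beta/lam*t^2 < b*f + beta/lam*f^2" using rhs lt by (simp add: algebra_simps)
  thus ?thesis using phi_mono[OF be lam bp] S mu bp unfolding t_def f_def
    by (meson less_imp_le add_pos_pos divide_pos_pos mult_pos_pos zero_less_one less_trans)
qed

lemma escape_plus:
  assumes lam: "lam > 0" and be: "beta \<ge> 0" and mu: "mu > 1" and lm: "lam^2 = mu^3"
    and a: "a > 0" and b: "b = mu * a + 1/mu"
  shows "alpha_step lam beta a b < mu*b"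
proof -
  have bp: "b > 1/mu" using a mu b by simp
  have bp0: "b > 0" using bp mu by (meson less_trans divide_pos_pos zero_less_one less_trans[OF zero_less_one mu])
  note S = step_eq[OF lam be less_imp_le[OF a] bp0]
  define f where "f = alpha_step lam beta a b"
  have aa: "a = (b - 1/mu)/mu" using b mu by (simp add: field_simps)
  have ma: "mu*a = b - 1/mu" using b by simp
  have "lam^2*a^2 = mu * (mu*a)^2" using lm by (simp add: power2_eq_square power3_eq_cube algebra_simps)
  hence "lam^2*a^2 = mu * (b - 1/mu)^2" using ma by simp
  moreover have "beta*lam*a*b = beta/lam * mu^2 * b*(b - 1/mu)"
  proof -
    have "beta*lam*a*b = beta/lam*(lam^2)*a*b" using lam by (simp add: power2_eq_square)
    also have "\<dots> = beta/lam*mu^2*b*(mu*a)" unfolding lm by (simp add: power2_eq_square power3_eq_cube)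
    finally show ?thesis using ma by simp
  qed
  ultimately have rhs: "b*f + beta/lam*f^2 = mu * (b - 1/mu)^2 + beta/lam * mu^2 * b*(b - 1/mu) + b"
    using S f_def by simp
  have "b*f + beta/lam*f^2 < b*(mu*b) + beta/lam*(mu*b)^2"
  proof -
    have e: "b*(mu*b) + beta/lam*(mu*b)^2 - (mu * (b - 1/mu)^2 + beta/lam * mu^2 * b*(b - 1/mu) + b)
      = (b - 1/mu) + beta/lam*mu*b"
    proof -
      have "\<And>c. b*(mu*b) + c*(mu*b)^2 - (mu * (b - 1/mu)^2 + c * mu^2 * b*(b - 1/mu) + b)
        = (b - 1/mu) + c*mu*b" using mu by (simp add: power2_eq_square field_simps)
      thus ?thesis .
    qed
    have "beta/lam*mu*b \<ge> 0" using be lam mu bp0 by simp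
    thus ?thesis using rhs e bp by linarith
  qed
  thus ?thesis using phi_mono[OF be lam bp0] S mu bp0 unfolding f_def
    by (meson less_imp_le mult_pos_pos less_trans[OF zero_less_one mu])
qed


lemma step_cont:
  assumes u: "continuous_on S u" and v: "continuous_on S v" and vp: "\<forall>x\<in>S. v x > 0"
  shows "continuous_on S (\<lambda>x. alpha_step lam beta (u x) (v x))"
proof (cases "beta = 0")
  case True
  have "continuous_on S (\<lambda>x. 1 + lam^2 * (u x)^2 / v x)"
    using u v vp by (intro continuous_intros) auto
  thus ?thesis using True unfolding alpha_step_def by simp
next
  case False
  have "continuous_on S (\<lambda>x. - (lam / (2*beta)) * v x
           + sqrt ((lam / (2*beta) * v x)^2 + (lam / beta) * (lam^2 * (u x)^2 + beta * lam * u x * v x + v x)))"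
    using u v by (intro continuous_intros)
  thus ?thesis using False unfolding alpha_step_def by simp
qed

lemma seq_cont:
  assumes lam: "lam > 0" and be: "beta \<ge> 0" and S: "S \<subseteq> {0<..}"
  shows "continuous_on S (\<lambda>x. alpha_seq_shift lam beta x n) \<and> (\<forall>x\<in>S. alpha_seq_shift lam beta x n \<ge> 0)
   \<and> continuous_on S (\<lambda>x. alpha_seq_shift lam beta x (Suc n)) \<and> (\<forall>x\<in>S. alpha_seq_shift lam beta x (Suc n) > 0)"
proof (induction n)
  case 0
  then show ?case using S by (auto intro: continuous_intros)
next
  case (Suc n)
  have c: "continuous_on S (\<lambda>x. alpha_seq_shift lam beta x (Suc (Suc n)))"
    using Suc step_cont[of S "\<lambda>x. alpha_seq_shift lam beta x n" "\<lambda>x. alpha_seq_shift lam beta x (Suc n)" lam beta]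
    by simp
  have p: "\<forall>x\<in>S. alpha_seq_shift lam beta x (Suc (Suc n)) > 0"
    using Suc step_eq[OF lam be] by simp
  show ?case using Suc c p by auto
qed

lemma subint:
  fixes f g :: "real \<Rightarrow> real"
  assumes pq: "p \<le> q" and cf: "continuous_on {p..q} f" and cg: "continuous_on {p..q} g"
    and sum: "\<forall>s\<in>{p..q}. f s + g s > 0" and fp: "f p < 0" and gq: "g q < 0"
  shows "\<exists>p' q'. p \<le> p' \<and> p' \<le> q' \<and> q' \<le> q \<and> f p' = 0 \<and> g q' = 0 \<and> (\<forall>s\<in>{p'..q'}. 0 \<le> f s \<and> 0 \<le> g s)"
proof -
  define T where "T = {s \<in> {p..q}. g s \<le> (\<lambda>_. 0) s}"
  have Tc: "closed T" unfolding T_def by (rule continuous_on_closed_Collect_le[OF cg]) (auto intro: continuous_intros)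
  have Tne: "T \<noteq> {}" using gq pq unfolding T_def by auto
  have Tb: "bdd_below T" unfolding T_def by (auto intro: bdd_belowI[of _ p])
  define s1 where "s1 = Inf T"
  have s1T: "s1 \<in> T" using closed_contains_Inf[OF Tne Tb Tc] s1_def by simp
  have s1r: "p \<le> s1" "s1 \<le> q" "g s1 \<le> 0" using s1T unfolding T_def by auto
  have below: "\<forall>s. p \<le> s \<and> s < s1 \<longrightarrow> g s > 0"
  proof (intro allI impI)
    fix s assume s: "p \<le> s \<and> s < s1"
    show "g s > 0"
    proof (rule ccontr)
      assume "\<not> g s > 0"
      hence "s \<in> T" using s s1r unfolding T_def by auto
      hence "s1 \<le> s" unfolding s1_def using Tb by (simp add: cInf_lower)
      thus False using s by simp
    qed
  qed
  have ps1: "p < s1"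
  proof (rule ccontr)
    assume "\<not> p < s1" hence "s1 = p" using s1r by simp
    hence "f p + g p < 0" using fp s1r by simp
    moreover have "f p + g p > 0" using sum pq by auto
    ultimately show False by simp
  qed
  have gs1: "g s1 = 0"
  proof (rule ccontr)
    assume "g s1 \<noteq> 0" hence neg: "g s1 < 0" using s1r by simp
    have gp: "g p > 0" using below ps1 by simp
    have "continuous_on {p..s1} g" using cg s1r by (auto intro: continuous_on_subset)
    then obtain x where x: "p \<le> x" "x \<le> s1" "g x = 0"
      using IVT2'[of g s1 0 p] neg gp ps1 by force
    have "x \<noteq> s1" using x neg by auto
    hence "x < s1" using x by simp
    thus False using below x by force
  qed
  have fs1: "f s1 > 0" using sum s1r gs1 by force
  define U where "U = {s \<in> {p..s1}. f s \<le> (\<lambda>_. 0) s}"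
  have cf1: "continuous_on {p..s1} f" using cf s1r by (auto intro: continuous_on_subset)
  have Uc: "closed U" unfolding U_def by (rule continuous_on_closed_Collect_le[OF cf1]) (auto intro: continuous_intros)
  have Une: "U \<noteq> {}" using fp ps1 unfolding U_def by (auto intro!: exI[of _ p])
  have Ub: "bdd_above U" unfolding U_def by (auto intro: bdd_aboveI[of _ s1])
  define s0 where "s0 = Sup U"
  have s0U: "s0 \<in> U" using closed_contains_Sup[OF Une Ub Uc] s0_def by simp
  have s0r: "p \<le> s0" "s0 \<le> s1" "f s0 \<le> 0" using s0U unfolding U_def by auto
  have above: "\<forall>s. s0 < s \<and> s \<le> s1 \<longrightarrow> f s > 0"
  proof (intro allI impI)
    fix s assume s: "s0 < s \<and> s \<le> s1"
    show "f s > 0"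
    proof (rule ccontr)
      assume "\<not> f s > 0"
      hence "s \<in> U" using s s0r unfolding U_def by auto
      hence "s \<le> s0" unfolding s0_def using Ub by (simp add: cSup_upper)
      thus False using s by simp
    qed
  qed
  have s01: "s0 < s1" using s0r fs1 by (cases "s0 = s1") auto
  have fs0: "f s0 = 0"
  proof (rule ccontr)
    assume "f s0 \<noteq> 0" hence neg: "f s0 < 0" using s0r by simp
    have "continuous_on {s0..s1} f" using cf s1r s0r by (auto intro: continuous_on_subset)
    then obtain x where x: "s0 \<le> x" "x \<le> s1" "f x = 0"
      using IVT'[of f s0 0 s1] neg fs1 s01 by force
    have "x \<noteq> s0" using x neg by auto
    hence "s0 < x" using x by simp
    thus False using above x by force
  qed
  show ?thesis
  proof (intro exI conjI)
    show "p \<le> s0" "s0 \<le> s1" "s1 \<le> q" "f s0 = 0" "g s1 = 0" using s0r s1r s01 fs0 gs1 by auto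
    show "\<forall>s\<in>{s0..s1}. 0 \<le> f s \<and> 0 \<le> g s"
    proof
      fix s assume s: "s \<in> {s0..s1}"
      have "0 \<le> f s" using above s fs0 by (cases "s = s0") (auto intro: less_imp_le)
      moreover have "0 \<le> g s" using below s gs1 s0r by (cases "s = s1") (auto intro: less_imp_le)
      ultimately show "0 \<le> f s \<and> 0 \<le> g s" by simp
    qed
  qed
qed


lemma alpha_0: "alpha lam beta x 0 = x" by (simp add: alpha_def)
lemma alpha_1: "alpha lam beta x (Suc 0) = alpha_step lam beta 0 x" by (simp add: alpha_def)
lemma alpha_SS: "alpha lam beta x (Suc (Suc n)) = alpha_step lam beta (alpha lam beta x n) (alpha lam beta x (Suc n))"
  by (simp add: alpha_def)

lemma exists_good:
  assumes lam: "lam > 0" and be: "beta \<ge> 0" and mu: "mu > 1" and lm: "lam^2 = mu^3"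
    and A: "A > 0" and AB: "A \<le> B"
    and base1: "mu * alpha lam beta A 0 + 1/mu - alpha lam beta A 1 < 0"
    and base2: "alpha lam beta B 1 - mu * alpha lam beta B 0 < 0"
    and cond: "\<forall>b. b \<ge> mu*A \<longrightarrow> beta*(2*b + 1/mu^2) < lam*b*(1-1/mu)"
  shows "\<exists>s\<in>{A..B}. \<forall>k. mu * alpha lam beta s k \<le> alpha lam beta s (Suc k)
           \<and> alpha lam beta s (Suc k) \<le> mu * alpha lam beta s k + 1/mu"
proof -
  define al where "al = (\<lambda>x n. alpha lam beta x n)"
  define Dm where "Dm = (\<lambda>k x. al x (Suc k) - mu * al x k)"
  define Dp where "Dp = (\<lambda>k x. mu * al x k + 1/mu - al x (Suc k))"
  define S where "S = {A..B}"
  have S0: "S \<subseteq> {0<..}" using A unfolding S_def by auto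
  have contal: "\<And>n. continuous_on S (\<lambda>x. al x n)"
    using seq_cont[OF lam be S0] unfolding al_def alpha_def by blast
  have posal: "\<And>n x. x \<in> S \<Longrightarrow> al x n > 0"
    using seq_cont[OF lam be S0] unfolding al_def alpha_def by blast
  have cDm: "\<And>k T. T \<subseteq> S \<Longrightarrow> continuous_on T (Dm k)"
    unfolding Dm_def by (intro continuous_intros continuous_on_subset[OF contal]) auto
  have cDp: "\<And>k T. T \<subseteq> S \<Longrightarrow> continuous_on T (Dp k)"
    unfolding Dp_def by (intro continuous_intros continuous_on_subset[OF contal]) auto
  have sumD: "\<And>k x. Dm k x + Dp k x > 0" unfolding Dm_def Dp_def using mu by simp
  have lowb: "\<And>x n k. x \<in> S \<Longrightarrow> (\<forall>k\<le>n. 0 \<le> Dm k x) \<Longrightarrow> k \<le> Suc n \<Longrightarrow> al x k \<ge> x"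
  proof -
    fix x n k assume x: "x \<in> S" and h: "\<forall>k\<le>n. 0 \<le> Dm k x" and kn: "k \<le> Suc n"
    from kn show "al x k \<ge> x"
    proof (induction k)
      case 0 then show ?case unfolding al_def by (simp add: alpha_0)
    next
      case (Suc k)
      have "al x (Suc k) \<ge> mu * al x k" using h Suc.prems unfolding Dm_def by auto
      moreover have "mu * al x k \<ge> al x k" using posal[OF x] mu by simp
      ultimately show ?case using Suc by simp
    qed
  qed
  have escm: "\<And>x n. x \<in> S \<Longrightarrow> (\<forall>k\<le>n. 0 \<le> Dm k x) \<Longrightarrow> Dm n x = 0 \<Longrightarrow> Dp (Suc n) x < 0"
  proof -
    fix x n assume x: "x \<in> S" and h: "\<forall>k\<le>n. 0 \<le> Dm k x" and z: "Dm n x = 0"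
    have b: "al x (Suc n) = mu * al x n" using z unfolding Dm_def by simp
    have "al x n \<ge> x" using lowb[OF x h] by simp
    hence "al x (Suc n) \<ge> mu*A" using b x mu unfolding S_def by simp
    hence c: "beta*(2*al x (Suc n) + 1/mu^2) < lam*al x (Suc n)*(1-1/mu)" using cond by simp
    have "mu * al x (Suc n) + 1/mu < alpha_step lam beta (al x n) (al x (Suc n))"
      using escape_minus[OF lam be mu lm posal[OF x] b c] .
    thus "Dp (Suc n) x < 0" unfolding Dp_def al_def by (simp add: alpha_SS)
  qed
  have escp: "\<And>x n. x \<in> S \<Longrightarrow> Dp n x = 0 \<Longrightarrow> Dm (Suc n) x < 0"
  proof -
    fix x n assume x: "x \<in> S" and z: "Dp n x = 0"
    have b: "al x (Suc n) = mu * al x n + 1/mu" using z unfolding Dp_def by simp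
    have "alpha_step lam beta (al x n) (al x (Suc n)) < mu * al x (Suc n)"
      using escape_plus[OF lam be mu lm posal[OF x] b] .
    thus "Dm (Suc n) x < 0" unfolding Dm_def al_def by (simp add: alpha_SS)
  qed
  have claim: "\<exists>p q. A \<le> p \<and> p \<le> q \<and> q \<le> B \<and> (\<forall>s\<in>{p..q}. \<forall>k\<le>n. 0 \<le> Dm k s \<and> 0 \<le> Dp k s)
     \<and> ((Dm n p = 0 \<and> Dp n q = 0) \<or> (Dp n p = 0 \<and> Dm n q = 0))" for n
  proof (induction n)
    case 0
    have "\<exists>p' q'. A \<le> p' \<and> p' \<le> q' \<and> q' \<le> B \<and> Dp 0 p' = 0 \<and> Dm 0 q' = 0 \<and>
        (\<forall>s\<in>{p'..q'}. 0 \<le> Dp 0 s \<and> 0 \<le> Dm 0 s)"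
      apply (rule subint[OF AB cDp cDm])
      using sumD base1 base2 unfolding Dm_def Dp_def al_def S_def by (auto simp: add.commute)
    then show ?case by force
  next
    case (Suc n)
    then obtain p q where pq: "A \<le> p" "p \<le> q" "q \<le> B"
      and G: "\<forall>s\<in>{p..q}. \<forall>k\<le>n. 0 \<le> Dm k s \<and> 0 \<le> Dp k s"
      and E: "(Dm n p = 0 \<and> Dp n q = 0) \<or> (Dp n p = 0 \<and> Dm n q = 0)" by blast
    have sub: "{p..q} \<subseteq> S" using pq unfolding S_def by auto
    have pS: "p \<in> S" and qS: "q \<in> S" using pq unfolding S_def by auto
    have Gp: "\<forall>k\<le>n. 0 \<le> Dm k p" and Gq: "\<forall>k\<le>n. 0 \<le> Dm k q" using G pq by auto
    have fin: "\<exists>p' q'. A \<le> p' \<and> p' \<le> q' \<and> q' \<le> B \<and> (\<forall>s\<in>{p'..q'}. \<forall>k\<le>Suc n. 0 \<le> Dm k s \<and> 0 \<le> Dp k s)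
       \<and> ((Dm (Suc n) p' = 0 \<and> Dp (Suc n) q' = 0) \<or> (Dp (Suc n) p' = 0 \<and> Dm (Suc n) q' = 0))"
      if sp: "p \<le> p'" "p' \<le> q'" "q' \<le> q" and z: "(Dm (Suc n) p' = 0 \<and> Dp (Suc n) q' = 0) \<or> (Dp (Suc n) p' = 0 \<and> Dm (Suc n) q' = 0)"
        and nn: "\<forall>s\<in>{p'..q'}. 0 \<le> Dm (Suc n) s \<and> 0 \<le> Dp (Suc n) s" for p' q'
    proof (intro exI conjI)
      show "A \<le> p'" "p' \<le> q'" "q' \<le> B" using sp pq by auto
      show "(Dm (Suc n) p' = 0 \<and> Dp (Suc n) q' = 0) \<or> (Dp (Suc n) p' = 0 \<and> Dm (Suc n) q' = 0)" using z .
      show "\<forall>s\<in>{p'..q'}. \<forall>k\<le>Suc n. 0 \<le> Dm k s \<and> 0 \<le> Dp k s"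
      proof (intro ballI allI impI)
        fix s k assume s: "s \<in> {p'..q'}" and k: "k \<le> Suc n"
        show "0 \<le> Dm k s \<and> 0 \<le> Dp k s"
        proof (cases "k = Suc n")
          case True then show ?thesis using nn s by simp
        next
          case False then show ?thesis using G s sp k by auto
        qed
      qed
    qed
    from E show ?case
    proof
      assume e: "Dm n p = 0 \<and> Dp n q = 0"
      have a1: "Dp (Suc n) p < 0" using escm[OF pS Gp] e by simp
      have a2: "Dm (Suc n) q < 0" using escp[OF qS] e by simp
      obtain p' q' where r: "p \<le> p'" "p' \<le> q'" "q' \<le> q" "Dp (Suc n) p' = 0" "Dm (Suc n) q' = 0"
        "\<forall>s\<in>{p'..q'}. 0 \<le> Dp (Suc n) s \<and> 0 \<le> Dm (Suc n) s"
        using subint[OF pq(2) cDp[OF sub] cDm[OF sub] _ a1 a2] sumD by (auto simp: add.commute)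
      show ?case using fin[OF r(1-3)] r by auto
    next
      assume e: "Dp n p = 0 \<and> Dm n q = 0"
      have a1: "Dm (Suc n) p < 0" using escp[OF pS] e by simp
      have a2: "Dp (Suc n) q < 0" using escm[OF qS Gq] e by simp
      obtain p' q' where r: "p \<le> p'" "p' \<le> q'" "q' \<le> q" "Dm (Suc n) p' = 0" "Dp (Suc n) q' = 0"
        "\<forall>s\<in>{p'..q'}. 0 \<le> Dm (Suc n) s \<and> 0 \<le> Dp (Suc n) s"
        using subint[OF pq(2) cDm[OF sub] cDp[OF sub] _ a1 a2] sumD by auto
      show ?case using fin[OF r(1-3)] r by auto
    qed
  qed
  define K where "K = (\<lambda>k. {x\<in>S. (\<lambda>_. 0) x \<le> Dm k x} \<inter> {x\<in>S. (\<lambda>_. 0) x \<le> Dp k x})"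
  have Kc: "closed (K k)" for k
    unfolding K_def S_def
    by (intro closed_Int continuous_on_closed_Collect_le continuous_intros cDm cDp) (auto simp: S_def)
  have "S \<inter> \<Inter>(range K) \<noteq> {}"
  proof (rule compact_imp_fip)
    show "compact S" unfolding S_def by simp
    show "\<And>T. T \<in> range K \<Longrightarrow> closed T" using Kc by auto
    fix F' assume fF: "finite F'" "F' \<subseteq> range K"
    then obtain C where C: "finite C" "F' = K ` C" using finite_subset_image by (metis subset_UNIV)
    then obtain n where n: "\<forall>k\<in>C. k \<le> n" using finite_nat_iff_bounded_le by auto
    obtain p q where pq: "A \<le> p" "p \<le> q" "q \<le> B" and G: "\<forall>s\<in>{p..q}. \<forall>k\<le>n. 0 \<le> Dm k s \<and> 0 \<le> Dp k s"
      using claim[of n] by blast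
    have "p \<in> S \<inter> \<Inter>F'" using pq G n C unfolding K_def S_def by auto
    thus "S \<inter> \<Inter>F' \<noteq> {}" by blast
  qed
  then obtain s where s: "s \<in> S" "\<And>k. s \<in> K k" by blast
  show ?thesis
  proof (intro bexI allI)
    show "s \<in> {A..B}" using s unfolding S_def by simp
    fix k show "mu * alpha lam beta s k \<le> alpha lam beta s (Suc k) \<and> alpha lam beta s (Suc k) \<le> mu * alpha lam beta s k + 1 / mu"
      using s(2)[of k] unfolding K_def Dm_def Dp_def al_def by auto
  qed
qed


lemma good_limit:
  fixes al :: "nat \<Rightarrow> real"
  assumes mu: "mu > 1" and a0: "al 0 > 0"
    and h: "\<And>k. mu * al k \<le> al (Suc k) \<and> al (Suc k) \<le> mu * al k + 1/mu"
  shows "\<exists>L>0. (\<lambda>j. al j / mu^j) \<longlonglongrightarrow> L"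
proof -
  define s where "s = (\<lambda>j. al j / mu^j)"
  have mp: "mu > 0" using mu by simp
  have inc: "s j \<le> s (Suc j)" for j
  proof -
    have "mu * al j / mu^(Suc j) \<le> al (Suc j) / mu^(Suc j)" using h[of j] mp by (intro divide_right_mono) auto
    moreover have "mu * al j / mu^(Suc j) = al j / mu^j" using mp by simp
    ultimately show ?thesis unfolding s_def by simp
  qed
  have up: "s (Suc j) \<le> s j + 1/mu^(j+2)" for j
  proof -
    have "al (Suc j) / mu^(Suc j) \<le> (mu * al j + 1/mu) / mu^(Suc j)" using h[of j] mp by (simp add: divide_right_mono)
    also have "\<dots> = s j + 1/mu^(j+2)" unfolding s_def using mp by (simp add: field_simps)
    finally show ?thesis unfolding s_def .
  qed
  define c where "c = 1/(mu*(mu-1))"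
  have cp: "c > 0" unfolding c_def using mu by simp
  have bnd: "s j + c/mu^j \<le> s 0 + c" for j
  proof (induction j)
    case 0 then show ?case by simp
  next
    case (Suc j)
    have "1/mu^(j+2) + c/mu^(Suc j) = (1/mu^2 + c/mu)/mu^j" using mp by (simp add: field_simps power2_eq_square)
    also have "1/mu^2 + c/mu = c" unfolding c_def using mu by (simp add: field_simps power2_eq_square del: power2_eq_square) (simp add: power2_eq_square algebra_simps)
    finally have "1/mu^(j+2) + c/mu^(Suc j) = c/mu^j" .
    then show ?case using up[of j] Suc by linarith
  qed
  have "s j \<le> s 0 + c" for j using bnd[of j] cp mp by (smt (verit) divide_nonneg_pos zero_less_power)
  moreover have "incseq s" using inc by (simp add: incseq_SucI)
  ultimately obtain L where L: "s \<longlonglongrightarrow> L" "\<forall>i. s i \<le> L" using incseq_convergent by metis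
  have "L > 0" using L(2)[rule_format, of 0] a0 unfolding s_def by simp
  thus ?thesis using L unfolding s_def by blast
qed

theorem theorem1:
  fixes lam :: real
  assumes "lam > 1"
  shows "\<exists>beta0 > 0. \<forall>beta. 0 \<le> beta \<and> beta < beta0 \<longrightarrow>
           (\<exists>a0 > 0. \<exists>C > 0.
              (\<lambda>j. (lam powr (- real j) * alpha lam beta a0 j) / (C * lam powr (- real j / 3)))
                \<longlonglongrightarrow> 1)"
proof -
  have lam: "lam > 0" using assms by simp
  define mu where "mu = lam powr (2/3)"
  have mu: "mu > 1" unfolding mu_def using assms powr_less_mono[of 0 "2/3" lam] by simp
  have mp: "mu > 0" using mu by simp
  have lm: "lam^2 = mu^3"
  proof -
    have "mu^3 = lam powr (of_nat 3 * (2/3))" unfolding mu_def by (rule powr_power) (use lam in simp)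
    also have "(of_nat 3 * (2/3)::real) = 2" by simp
    also have "lam powr 2 = lam^2" using lam by (simp only: powr_numeral less_imp_le)
    finally show ?thesis by simp
  qed
  define A where "A = (1 - 1/mu)/(2*mu)"
  define B where "B = 2/mu"
  define m where "m = (1 + 1/mu)/2"
  define K where "K = 2 + 1/(mu^3*A)"
  have i1: "1/mu < 1" using mu by simp
  have i0: "1/mu > 0" using mp by simp
  have Ap: "A > 0" unfolding A_def using i1 mp by simp
  have AB: "A \<le> B" unfolding A_def B_def using mu by (simp add: field_simps)
  have mA: "mu*A + 1/mu = m" unfolding A_def m_def using mp by (simp add: field_simps)
  have m1: "m < 1" "m > 0" unfolding m_def using i1 i0 by (simp_all add: field_simps)
  have Kp: "K > 0" unfolding K_def using Ap mp by (simp add: add_pos_pos)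
  define beta0 where "beta0 = min (lam*(1-1/mu)/K) (lam*A*(1-m)/m^2)"
  have b0: "beta0 > 0" unfolding beta0_def using lam i1 Kp Ap m1 by simp
  have main: "\<exists>a0 > 0. \<exists>C > 0.
              (\<lambda>j. (lam powr (- real j) * alpha lam beta a0 j) / (C * lam powr (- real j / 3)))
                \<longlonglongrightarrow> 1" if be: "0 \<le> beta" and bb: "beta < beta0" for beta
  proof -
    have base1: "mu * alpha lam beta A 0 + 1/mu - alpha lam beta A 1 < 0"
    proof -
      define f where "f = alpha lam beta A 1"
      have S: "f > 0 \<and> A * f + beta/lam*f^2 = A"
        using step_eq[OF lam be order_refl Ap] unfolding f_def by (simp add: alpha_1)
      have "beta*m^2 < lam*A*(1-m)"
      proof -
        have "beta < lam*A*(1-m)/m^2" using bb unfolding beta0_def by simp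
        thus ?thesis using m1 by (simp add: field_simps)
      qed
      hence "beta/lam*m^2 < A*(1-m)" using lam by (simp add: field_simps)
      hence "A*m + beta/lam*m^2 < A*f + beta/lam*f^2" using S by (simp add: algebra_simps)
      hence "m < f" using phi_mono[OF be lam Ap] m1 S by (meson less_imp_le)
      thus ?thesis using mA unfolding f_def by (simp add: alpha_0)
    qed
    have Bp: "B > 0" unfolding B_def using mp by simp
    have base2: "alpha lam beta B 1 - mu * alpha lam beta B 0 < 0"
    proof -
      define f where "f = alpha lam beta B 1"
      have S: "f > 0 \<and> B * f + beta/lam*f^2 = B"
        using step_eq[OF lam be order_refl Bp] unfolding f_def by (simp add: alpha_1)
      have "beta/lam*2^2 \<ge> 0" using be lam by simp
      hence "B < B*2 + beta/lam*2^2" using Bp by linarith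
      hence "B * f + beta/lam*f^2 < B*2 + beta/lam*2^2" using S by simp
      hence "f < 2" using phi_mono[OF be lam Bp] S by (meson less_imp_le zero_le_numeral)
      thus ?thesis unfolding f_def B_def using mp by (simp add: alpha_0)
    qed
    have cond: "\<forall>b. b \<ge> mu*A \<longrightarrow> beta*(2*b + 1/mu^2) < lam*b*(1-1/mu)"
    proof (intro allI impI)
      fix b assume b: "b \<ge> mu*A"
      have bp: "b > 0" using b Ap mp by (smt (verit) mult_pos_pos)
      have "1/mu^2 \<le> b/(mu^3*A)" using b Ap mp by (simp add: field_simps power2_eq_square power3_eq_cube)
      hence "2*b + 1/mu^2 \<le> K*b" unfolding K_def using bp by (simp add: field_simps)
      hence "beta*(2*b + 1/mu^2) \<le> beta*(K*b)" using be by (simp add: mult_left_mono)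
      also have "\<dots> < beta0*(K*b)" using bb Kp bp by simp
      also have "\<dots> \<le> lam*(1-1/mu)/K*(K*b)" using Kp bp unfolding beta0_def by (intro mult_right_mono) auto
      also have "\<dots> = lam*b*(1-1/mu)" using Kp by simp
      finally show "beta*(2*b + 1/mu^2) < lam*b*(1-1/mu)" .
    qed
    obtain s where s: "s \<in> {A..B}" and G: "\<forall>k. mu * alpha lam beta s k \<le> alpha lam beta s (Suc k)
           \<and> alpha lam beta s (Suc k) \<le> mu * alpha lam beta s k + 1/mu"
      using exists_good[OF lam be mu lm Ap AB base1 base2 cond] by blast
    have sp: "s > 0" using s Ap by simp
    obtain L where L: "L > 0" "(\<lambda>j. alpha lam beta s j / mu^j) \<longlonglongrightarrow> L"
      using good_limit[of mu "alpha lam beta s", OF mu] G sp by (auto simp: alpha_0)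
    have eq: "(lam powr (- real j) * alpha lam beta s j) / (L * lam powr (- real j / 3))
        = (alpha lam beta s j / mu^j) / L" for j
    proof -
      have "mu^j = lam powr (of_nat j * (2/3))" unfolding mu_def by (rule powr_power) (use lam in simp)
      hence "mu^j = lam powr (2/3 * real j)" by (simp add: mult.commute)
      moreover have "lam powr (- real j) = lam powr (- real j / 3) * lam powr (- (2/3 * real j))"
        by (simp add: powr_add[symmetric])
      moreover have "lam powr (- (2/3 * real j)) = 1 / lam powr (2/3 * real j)"
        by (simp add: powr_minus_divide)
      ultimately show ?thesis using lam L(1) by (simp add: field_simps)
    qed
    have "(\<lambda>j. (alpha lam beta s j / mu^j) / L) \<longlonglongrightarrow> L / L"
      by (intro tendsto_divide L(2) tendsto_const) (use L in simp)
    have "(\<lambda>j. (lam powr (- real j) * alpha lam beta s j) / (L * lam powr (- real j / 3))) \<longlonglongrightarrow> 1"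
    proof -
      have "L / L = 1" using L(1) by simp
      with \<open>(\<lambda>j. (alpha lam beta s j / mu^j) / L) \<longlonglongrightarrow> L / L\<close> show ?thesis by (simp only: eq)
    qed
    thus ?thesis using sp L(1) by blast
  qed
  show ?thesis using b0 main by blast
qed

end
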